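(* Let $\mu_1,\mu_2>0$ and $0\le p<1$ with $\frac1{\mu_1}+\frac p{\mu_2}=1$, let $b\ge1$, $N\ge2$, $0<\alpha<0.5$, $\lambda=1-N^{-\alpha}$, $w_u=\max\{(1-p)\mu_1,\mu_2\}$, $w_l=\min\{(1-p)\mu_1,\mu_2\}$, $k=\left(1+\frac{w_u b}{w_l}\right)\left(\frac{1+\mu_1+\mu_2}{w_l}+2\mu_1\right)$. Let $$\mathcal S_{ssc_1}=\left\{s:\ s_1\ge \lambda+\left(\tfrac{1+\mu_1+\mu_2}{w_l}-\mu_1\right)\tfrac{\log N}{\sqrt N},\ s_{1,1}\ge \tfrac{\lambda}{\mu_1}-\tfrac{\log N}{\sqrt N},\ s_{1,2}\ge \tfrac{p\lambda}{\mu_2}-\tfrac{\mu_1\log N}{\sqrt N}\right\},$$ where for $s\in\mathbb R^{b\times2}$, $s_i=s_{i,1}+s_{i,2}$. Then for every $s\in\mathcal S_{ssc_1}$, $$\left(\lambda+\frac{\log N}{\sqrt N}-(1-p)\mu_1s_{1,1}-\mu_2s_{1,2}\right)\mathbb I_{\left\{\sum_{i=1}^b s_i>\lambda+\frac{k\log N}{\sqrt N}+\frac1N\right\}}\le 0.$$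
   Context: Here $s=(s_{i,m})_{1\le i\le b,\,m\in\{1,2\}}$ is a system state: $s_{i,m}$ is the fraction of servers (out of $N$) with at least $i$ jobs whose job in service is in phase $m$ of a Coxian-2 service distribution, so $s$ belongs to $\mathcal S^{(N)}=\{s: 1\ge s_{1,m}\ge\cdots\ge s_{b,m}\ge0,\ s_{1,1}+s_{1,2}\le1,\ Ns_{i,m}\in\mathbb N\}$. $\mathbb I$ denotes an indicator. *)

theory Defs
  imports Complex_Main
begin

text \<open>A system state is s :: nat => nat => real, where s i m is the fraction of
servers with at least i jobs whose job in service is in phase m (1 <= i <= b, m in {1,2}).\<close>

definition state_space :: "nat \<Rightarrow> nat \<Rightarrow> (nat \<Rightarrow> nat \<Rightarrow> real) set" where
  "state_space N b = {s.
     (\<forall>m\<in>{1,2}. s 1 m \<le> 1 \<and> (\<forall>i\<in>{1..<b}. s (Suc i) m \<le> s i m) \<and> 0 \<le> s b m)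
   \<and> s 1 1 + s 1 2 \<le> 1
   \<and> (\<forall>i\<in>{1..b}. \<forall>m\<in>{1,2}. \<exists>n::nat. real N * s i m = real n)}"

definition tot :: "(nat \<Rightarrow> nat \<Rightarrow> real) \<Rightarrow> nat \<Rightarrow> real" where
  "tot s i = s i 1 + s i 2"

definition S_ssc1 :: "nat \<Rightarrow> nat \<Rightarrow> real \<Rightarrow> real \<Rightarrow> real \<Rightarrow> real \<Rightarrow> real \<Rightarrow> (nat \<Rightarrow> nat \<Rightarrow> real) set" where
  "S_ssc1 N b lam \<mu>1 \<mu>2 p wl = {s \<in> state_space N b.
     tot s 1 \<ge> lam + ((1 + \<mu>1 + \<mu>2) / wl - \<mu>1) * ln (real N) / sqrt (real N)
   \<and> s 1 1 \<ge> lam / \<mu>1 - ln (real N) / sqrt (real N)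
   \<and> s 1 2 \<ge> p * lam / \<mu>2 - \<mu>1 * ln (real N) / sqrt (real N)}"

end

theory Submission
  imports Defs
begin

lemma core:
  fixes \<mu>1 \<mu>2 p lam wl L a c :: real
  assumes m1: "\<mu>1 > 0" and m2: "\<mu>2 > 0" and "0 \<le> p" and "p < 1"
    and h: "1 / \<mu>1 + p / \<mu>2 = 1"
    and wl: "wl = min ((1 - p) * \<mu>1) \<mu>2" and L: "L \<ge> 0"
    and ac: "a + c \<ge> lam + ((1 + \<mu>1 + \<mu>2) / wl - \<mu>1) * L"
    and ha: "a \<ge> lam / \<mu>1 - L"
    and hc: "c \<ge> p * lam / \<mu>2 - \<mu>1 * L"
  shows "lam + L - (1 - p) * \<mu>1 * a - \<mu>2 * c \<le> 0"
proof -
  have e: "\<mu>2 + p * \<mu>1 = \<mu>1 * \<mu>2" using h m1 m2 by (simp add: field_simps)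
  have wlpos: "wl > 0" using wl m1 m2 \<open>p<1\<close> by simp
  have ac': "wl * (a + c) \<ge> wl * lam + ((1 + \<mu>1 + \<mu>2) - wl * \<mu>1) * L"
  proof -
    have "wl * (a + c) \<ge> wl * (lam + ((1 + \<mu>1 + \<mu>2) / wl - \<mu>1) * L)"
      using ac wlpos by (intro mult_left_mono) auto
    moreover have "wl * (((1 + \<mu>1 + \<mu>2) / wl - \<mu>1) * L) = ((1 + \<mu>1 + \<mu>2) - wl * \<mu>1) * L"
      using wlpos by (simp add: field_simps)
    ultimately show ?thesis by (simp add: distrib_left)
  qed
  show ?thesis
  proof (cases "\<mu>2 \<le> (1 - p) * \<mu>1")
    case True
    hence w: "wl = \<mu>2" using wl by simp
    have T: "((1 - p) * \<mu>1 - \<mu>2) * a \<ge> ((1 - p) * \<mu>1 - \<mu>2) * (lam / \<mu>1 - L)"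
      using ha True by (intro mult_left_mono) auto
    have q: "\<mu>2 / \<mu>1 + p = \<mu>2" using e m1 by (simp add: field_simps)
    have r: "((1 - p) * \<mu>1 - \<mu>2) * (lam / \<mu>1 - L) = (1-p)*lam - (\<mu>2/\<mu>1)*lam - ((1 - p) * \<mu>1 - \<mu>2) * L"
      using m1 by (simp add: field_simps)
    have r2: "(\<mu>2/\<mu>1)*lam = \<mu>2*lam - p*lam" using q by (metis add_diff_cancel_right' left_diff_distrib)
    have g: "(1 - p) * \<mu>1 * a + \<mu>2 * c = \<mu>2 * (a + c) + ((1 - p) * \<mu>1 - \<mu>2) * a"
      by (simp add: algebra_simps)
    have cf: "((1 + \<mu>1 + \<mu>2) - \<mu>2 * \<mu>1) * L - ((1 - p) * \<mu>1 - \<mu>2) * L = L + \<mu>2 * L"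
      using e by (simp add: algebra_simps)
    have "\<mu>2 * L \<ge> 0" using m2 L by simp
    then show ?thesis using ac'[unfolded w] T r r2 g cf by (simp only: algebra_simps)
  next
    case False
    hence w: "wl = (1 - p) * \<mu>1" using wl by simp
    have T: "(\<mu>2 - (1 - p) * \<mu>1) * c \<ge> (\<mu>2 - (1 - p) * \<mu>1) * (p * lam / \<mu>2 - \<mu>1 * L)"
      using hc False by (intro mult_left_mono) auto
    have q: "p*(\<mu>1/\<mu>2) = \<mu>1 - 1" using e m2 by (simp add: field_simps)
    have r: "(\<mu>2 - (1 - p) * \<mu>1) * (p * lam / \<mu>2 - \<mu>1 * L) = p*lam - (1-p)*lam*(p*(\<mu>1/\<mu>2)) - (\<mu>2 - (1 - p) * \<mu>1) * \<mu>1 * L"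
      using m2 by (simp add: field_simps)
    have r2: "(1-p)*lam*(p*(\<mu>1/\<mu>2)) = (1-p)*lam*\<mu>1 - (1-p)*lam" unfolding q by (simp add: algebra_simps)
    have g: "(1 - p) * \<mu>1 * a + \<mu>2 * c = (1 - p) * \<mu>1 * (a + c) + (\<mu>2 - (1 - p) * \<mu>1) * c"
      by (simp add: algebra_simps)
    have g2: "(1 - p) * \<mu>1 * lam = (1-p)*lam*\<mu>1" by simp
    have cf: "((1 + \<mu>1 + \<mu>2) - (1 - p) * \<mu>1 * \<mu>1) * L - (\<mu>2 - (1 - p) * \<mu>1) * \<mu>1 * L = L + (1 - p) * \<mu>1 * L"
    proof -
      have "(\<mu>1 * \<mu>2) * L = (\<mu>2 + p * \<mu>1) * L" using e by simp
      thus ?thesis by (simp only: algebra_simps)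
    qed
    have "(1 - p) * \<mu>1 * L \<ge> 0" using m1 L \<open>p < 1\<close> by simp
    then show ?thesis using ac'[unfolded w] T r r2 g g2 cf by (simp only: algebra_simps)
  qed
qed

theorem lemma4:
  fixes \<mu>1 \<mu>2 p \<alpha> lam wu wl k :: real and b N :: nat and s :: "nat \<Rightarrow> nat \<Rightarrow> real"
  assumes "\<mu>1 > 0" and "\<mu>2 > 0" and "0 \<le> p" and "p < 1"
    and "1 / \<mu>1 + p / \<mu>2 = 1"
    and "b \<ge> 1" and "N \<ge> 2" and "0 < \<alpha>" and "\<alpha> < 0.5"
    and "lam = 1 - real N powr (-\<alpha>)"
    and "wu = max ((1 - p) * \<mu>1) \<mu>2" and "wl = min ((1 - p) * \<mu>1) \<mu>2"
    and "k = (1 + wu * real b / wl) * ((1 + \<mu>1 + \<mu>2) / wl + 2 * \<mu>1)"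
    and "s \<in> S_ssc1 N b lam \<mu>1 \<mu>2 p wl"
  shows "(lam + ln (real N) / sqrt (real N) - (1 - p) * \<mu>1 * s 1 1 - \<mu>2 * s 1 2)
           * (if (\<Sum>i=1..b. tot s i) > lam + k * ln (real N) / sqrt (real N) + 1 / real N
              then 1 else 0) \<le> 0"
proof -
  have L: "ln (real N) / sqrt (real N) \<ge> 0" using assms(7) by simp
  have "lam + ln (real N) / sqrt (real N) - (1 - p) * \<mu>1 * s 1 1 - \<mu>2 * s 1 2 \<le> 0"
    apply (rule core[OF assms(1-5,12) L])
    using assms(14) by (auto simp: S_ssc1_def tot_def)
  thus ?thesis by simp
qed

end
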